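(* Let $G$ be a digraph and $f$ a discrete Morse function on $G$. Then for any allowed elementary path $v_0v_1\cdots v_n$ in $G$ there is at most one index $i\in\{0,\dots,n\}$ with $f(v_i)=0$.
   Context: A digraph $G=(V,E)$ consists of a set $V$ and $E\subseteq(V\times V)\setminus\{(v,v)\}$; $(u,v)\in E$ is written $u\to v$. An allowed elementary $n$-path is a sequence $v_0\cdots v_n$ of vertices with $v_{i-1}\to v_i\in E$ for $1\le i\le n$. A map $f:V\to[0,+\infty)$ is a discrete Morse function on $G$ if for every allowed elementary path $v_0\cdots v_n$: (i) there is at most one index $i$ with $f(v_i)=0$ such that $v_0\cdots v_{i-1}v_{i+1}\cdots v_n$ is an allowed elementary $(n-1)$-path; (ii) there is at most one vertex $u$ with $f(u)=0$ such that for some $-1\le j\le n$ the sequence $v_0\cdots v_juv_{j+1}\cdots v_n$ (meaning $uv_0\cdots v_n$ if $j=-1$, $v_0\cdots v_nu$ if $j=n$) is an allowed elementary $(n+1)$-path. *)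

theory Defs
  imports Complex_Main
begin

definition digraph :: "'a set \<Rightarrow> ('a \<times> 'a) set \<Rightarrow> bool" where
  "digraph V E \<longleftrightarrow> E \<subseteq> (V \<times> V) - {(v, v) | v. True}"

text \<open>An allowed elementary n-path v0...vn is represented by the list [v0,...,vn]
  (length n+1); consecutive vertices must be joined by an edge.\<close>
definition allowed_path :: "'a set \<Rightarrow> ('a \<times> 'a) set \<Rightarrow> 'a list \<Rightarrow> bool" where
  "allowed_path V E p \<longleftrightarrow> p \<noteq> [] \<and> set p \<subseteq> V \<and>
     (\<forall>i. Suc i < length p \<longrightarrow> (p ! i, p ! Suc i) \<in> E)"

text \<open>Deleting the vertex at index i, and inserting u at position k
  (k = j+1 for j in {-1,...,n}, i.e. k in {0,...,n+1}).\<close>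
definition del_at :: "nat \<Rightarrow> 'a list \<Rightarrow> 'a list" where
  "del_at i p = take i p @ drop (Suc i) p"

definition ins_at :: "nat \<Rightarrow> 'a \<Rightarrow> 'a list \<Rightarrow> 'a list" where
  "ins_at k u p = take k p @ u # drop k p"

definition discrete_morse :: "'a set \<Rightarrow> ('a \<times> 'a) set \<Rightarrow> ('a \<Rightarrow> real) \<Rightarrow> bool" where
  "discrete_morse V E f \<longleftrightarrow>
     (\<forall>v\<in>V. 0 \<le> f v) \<and>
     (\<forall>p. allowed_path V E p \<longrightarrow>
        (\<forall>i i'. i < length p \<and> f (p ! i) = 0 \<and> allowed_path V E (del_at i p) \<and>
                i' < length p \<and> f (p ! i') = 0 \<and> allowed_path V E (del_at i' p)
                \<longrightarrow> i = i') \<and>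
        (\<forall>u u'. u \<in> V \<and> f u = 0 \<and> (\<exists>k\<le>length p. allowed_path V E (ins_at k u p)) \<and>
                u' \<in> V \<and> f u' = 0 \<and> (\<exists>k\<le>length p. allowed_path V E (ins_at k u' p))
                \<longrightarrow> u = u'))"

end

theory Submission
  imports Defs
begin

lemma ap_take: "allowed_path V E p \<Longrightarrow> 0 < n \<Longrightarrow> allowed_path V E (take n p)"
  unfolding allowed_path_def
  by (auto dest: in_set_takeD)

lemma ap_drop: "allowed_path V E p \<Longrightarrow> n < length p \<Longrightarrow> allowed_path V E (drop n p)"
  unfolding allowed_path_def
  by (auto dest: in_set_dropD)

lemma main_lt:
  assumes "discrete_morse V E f" "allowed_path V E p"
    and "i < j" "j < length p" "f (p ! i) = 0" "f (p ! j) = 0"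
  shows False
proof -
  define q where "q = take (Suc (j - i)) (drop i p)"
  have aq: "allowed_path V E q" unfolding q_def
    using assms by (intro ap_take ap_drop) auto
  have lq: "length q = Suc (j - i)" unfolding q_def using assms by auto
  have q0: "q ! 0 = p ! i" unfolding q_def using assms by auto
  have qn: "q ! (j - i) = p ! j" unfolding q_def using assms by auto
  have d0: "del_at 0 q = drop 1 q" unfolding del_at_def by simp
  have dn: "del_at (j - i) q = take (j - i) q" unfolding del_at_def using lq by simp
  have a0: "allowed_path V E (del_at 0 q)" unfolding d0
    using aq lq assms(3) by (intro ap_drop) auto
  have an: "allowed_path V E (del_at (j - i) q)" unfolding dn
    using aq assms(3) by (intro ap_take) auto
  from assms(1) aq have
    "\<forall>i i'. i < length q \<and> f (q ! i) = 0 \<and> allowed_path V E (del_at i q) \<and>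
                i' < length q \<and> f (q ! i') = 0 \<and> allowed_path V E (del_at i' q)
                \<longrightarrow> i = i'"
    unfolding discrete_morse_def by blast
  from this[rule_format, of 0 "j - i"] show False
    using a0 an lq q0 qn assms by auto
qed

theorem lemma4p3:
  fixes V :: "'a set" and E :: "('a \<times> 'a) set" and f :: "'a \<Rightarrow> real" and p :: "'a list"
  assumes "digraph V E"
    and "discrete_morse V E f"
    and "allowed_path V E p"
  shows "\<forall>i j. i < length p \<and> f (p ! i) = 0 \<and> j < length p \<and> f (p ! j) = 0 \<longrightarrow> i = j"
proof (intro allI impI)
  fix i j assume h: "i < length p \<and> f (p ! i) = 0 \<and> j < length p \<and> f (p ! j) = 0"
  show "i = j"
  proof (rule linorder_cases[of i j])
    assume "i < j" thus ?thesis using main_lt[OF assms(2,3)] h by blast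
  next
    assume "j < i" thus ?thesis using main_lt[OF assms(2,3)] h by blast
  qed
qed

end
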